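(* Let $a,b\geq1$ and $P=[a]\times[b]$. For every $p=(i,j)\in P$, \[\mathbb{1}_p=\sum_{\substack{(i',j')\in P\\ i'\geq i,\ j'\geq j}}T^-_{(i',j')}\;-\;\sum_{\substack{(i',j')\in P\\ i'> i,\ j'> j}}T^+_{(i',j')}\] as functions $\mathcal{J}(P)\to\mathbb{R}$.
   Context: $[a]\times[b]=\{(i,j)\colon 1\le i\le a,\ 1\le j\le b\}$ with $(i,j)\le(i',j')$ iff $i\le i'$ and $j\le j'$. $\mathcal{J}(P)$ is the set of order ideals of $P$. For $x\in P$, $I\in\mathcal{J}(P)$: $\mathbb{1}_x(I)=1$ if $x\in I$, else $0$; $T_x^+(I)=1$ if $x$ is a minimal element of $P\setminus I$, else $0$; $T_x^-(I)=1$ if $x$ is a maximal element of $I$, else $0$. *)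

theory Defs
  imports Complex_Main "HOL-Library.Product_Order"
begin

definition grid :: "nat \<Rightarrow> nat \<Rightarrow> (nat \<times> nat) set" where
  "grid a b = {1..a} \<times> {1..b}"

definition order_ideals :: "'a::order set \<Rightarrow> 'a set set" where
  "order_ideals P = {I. I \<subseteq> P \<and> (\<forall>x\<in>I. \<forall>y\<in>P. y \<le> x \<longrightarrow> y \<in> I)}"

definition ind :: "'a \<Rightarrow> 'a set \<Rightarrow> real" where
  "ind x I = (if x \<in> I then 1 else 0)"

definition Tplus :: "'a::order set \<Rightarrow> 'a \<Rightarrow> 'a set \<Rightarrow> real" where
  "Tplus P x I = (if x \<in> P - I \<and> (\<forall>y\<in>P - I. \<not> y < x) then 1 else 0)"

definition Tminus :: "'a::order \<Rightarrow> 'a set \<Rightarrow> real" where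
  "Tminus x I = (if x \<in> I \<and> (\<forall>y\<in>I. \<not> x < y) then 1 else 0)"

end

theory Submission
  imports Defs
begin

lemma tele1:
  fixes g :: "nat \<Rightarrow> real"
  shows "i \<le> Suc a \<Longrightarrow> (\<Sum>c=i..a. g c - g (Suc c)) = g i - g (Suc a)"
proof (induction a)
  case 0
  then show ?case by (cases i) auto
next
  case (Suc a)
  then show ?case by (cases "i = Suc (Suc a)") auto
qed

lemma tele2:
  fixes F :: "nat \<Rightarrow> nat \<Rightarrow> real"
  assumes "i \<le> Suc a" "j \<le> Suc b"
  shows "(\<Sum>c=i..a. \<Sum>r=j..b. F c r - F (Suc c) r - F c (Suc r) + F (Suc c) (Suc r))
     = F i j - F (Suc a) j - F i (Suc b) + F (Suc a) (Suc b)"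
proof -
  have "(\<Sum>c=i..a. \<Sum>r=j..b. F c r - F (Suc c) r - F c (Suc r) + F (Suc c) (Suc r))
      = (\<Sum>c=i..a. (\<lambda>c. F c j - F c (Suc b)) c - (\<lambda>c. F c j - F c (Suc b)) (Suc c))"
  proof (rule sum.cong[OF refl])
    fix c
    have "(\<Sum>r=j..b. F c r - F (Suc c) r - F c (Suc r) + F (Suc c) (Suc r))
       = (\<Sum>r=j..b. (\<lambda>r. F c r - F (Suc c) r) r - (\<lambda>r. F c r - F (Suc c) r) (Suc r))"
      by (rule sum.cong) auto
    also have "\<dots> = F c j - F (Suc c) j - (F c (Suc b) - F (Suc c) (Suc b))"
      using tele1[OF assms(2), of "\<lambda>r. F c r - F (Suc c) r"] by simp
    finally show "(\<Sum>r=j..b. F c r - F (Suc c) r - F c (Suc r) + F (Suc c) (Suc r))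
       = (\<lambda>c. F c j - F c (Suc b)) c - (\<lambda>c. F c j - F c (Suc b)) (Suc c)" by simp
  qed
  also have "\<dots> = F i j - F (Suc a) j - F i (Suc b) + F (Suc a) (Suc b)"
    using tele1[OF assms(1), of "\<lambda>c. F c j - F c (Suc b)"] by simp
  finally show ?thesis .
qed

theorem lemma3p8:
  fixes a b i j :: nat
  assumes "a \<ge> 1" and "b \<ge> 1" and "(i, j) \<in> grid a b"
  shows "\<forall>I \<in> order_ideals (grid a b).
    ind (i, j) I =
      (\<Sum>q \<in> {(i', j') \<in> grid a b. i' \<ge> i \<and> j' \<ge> j}. Tminus q I)
    - (\<Sum>q \<in> {(i', j') \<in> grid a b. i' > i \<and> j' > j}. Tplus (grid a b) q I)"
proof
  fix I assume I: "I \<in> order_ideals (grid a b)"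
  define f where "f c r = ind (c, r) I" for c r
  have ij: "1 \<le> i" "i \<le> a" "1 \<le> j" "j \<le> b" using assms(3) by (auto simp: grid_def)
  have Isub: "I \<subseteq> grid a b" and Idown: "\<And>x y. x \<in> I \<Longrightarrow> y \<in> grid a b \<Longrightarrow> y \<le> x \<Longrightarrow> y \<in> I"
    using I by (auto simp: order_ideals_def)
  have out: "f c r = 0" if "c = 0 \<or> r = 0 \<or> c > a \<or> r > b" for c r
    using that Isub by (auto simp: f_def ind_def grid_def)
  have f01: "f c r = 0 \<or> f c r = 1" for c r by (auto simp: f_def ind_def)
  have mono: "f (Suc c) r \<le> f c r" "f c (Suc r) \<le> f c r" if "c \<ge> 1" "r \<ge> 1" for c r
  proof -
    show "f (Suc c) r \<le> f c r"
    proof (cases "(Suc c, r) \<in> I")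
      case True
      then have "(c, r) \<in> I" using Idown[OF True] Isub True that
        by (auto simp: grid_def less_eq_prod_def)
      then show ?thesis by (simp add: f_def ind_def)
    qed (auto simp: f_def ind_def)
    show "f c (Suc r) \<le> f c r"
    proof (cases "(c, Suc r) \<in> I")
      case True
      then have "(c, r) \<in> I" using Idown[OF True] Isub True that
        by (auto simp: grid_def less_eq_prod_def)
      then show ?thesis by (simp add: f_def ind_def)
    qed (auto simp: f_def ind_def)
  qed
  have Tm: "Tminus (c, r) I = f c r - f (Suc c) r - f c (Suc r) + f c (Suc r) * f (Suc c) r"
    if cr: "(c, r) \<in> grid a b" for c r
  proof -
    have key: "(\<forall>y\<in>I. \<not> (c, r) < y) \<longleftrightarrow> (Suc c, r) \<notin> I \<and> (c, Suc r) \<notin> I"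
    proof
      assume "\<forall>y\<in>I. \<not> (c, r) < y"
      then show "(Suc c, r) \<notin> I \<and> (c, Suc r) \<notin> I"
        by (auto simp: less_prod_def less_eq_prod_def)
    next
      assume n: "(Suc c, r) \<notin> I \<and> (c, Suc r) \<notin> I"
      show "\<forall>y\<in>I. \<not> (c, r) < y"
      proof (intro ballI notI)
        fix y assume y: "y \<in> I" "(c, r) < y"
        obtain y1 y2 where yy: "y = (y1, y2)" by (cases y)
        have yg: "y \<in> grid a b" using y Isub by auto
        from y(2) yy have "c < y1 \<and> r \<le> y2 \<or> c \<le> y1 \<and> r < y2"
          by (auto simp: less_prod_def less_eq_prod_def)
        then show False
        proof
          assume h: "c < y1 \<and> r \<le> y2"
          have "(Suc c, r) \<in> I"
            using Idown[OF y(1)] h yy yg cr by (auto simp: grid_def less_eq_prod_def)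
          then show False using n by simp
        next
          assume h: "c \<le> y1 \<and> r < y2"
          have "(c, Suc r) \<in> I"
            using Idown[OF y(1)] h yy yg cr by (auto simp: grid_def less_eq_prod_def)
          then show False using n by simp
        qed
      qed
    qed
    have d1: "(c, r) \<in> I" if "(Suc c, r) \<in> I"
      using Idown[OF that] cr by (auto simp: grid_def less_eq_prod_def)
    have d2: "(c, r) \<in> I" if "(c, Suc r) \<in> I"
      using Idown[OF that] cr by (auto simp: grid_def less_eq_prod_def)
    show ?thesis
      unfolding Tminus_def key f_def ind_def using d1 d2 by auto
  qed
  have Tp: "Tplus (grid a b) (c, r) I = f (c - 1) r * f c (r - 1) - f c r"
    if cr: "(c, r) \<in> grid a b" "c \<ge> 2" "r \<ge> 2" for c r
  proof -
    have g1: "(c - 1, r) \<in> grid a b" "(c, r - 1) \<in> grid a b"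
      using cr by (auto simp: grid_def)
    have key: "(\<forall>y\<in>grid a b - I. \<not> y < (c, r)) \<longleftrightarrow> (c - 1, r) \<in> I \<and> (c, r - 1) \<in> I"
    proof
      assume "\<forall>y\<in>grid a b - I. \<not> y < (c, r)"
      then have "\<not> (c - 1, r) < (c, r) \<or> (c - 1, r) \<in> I" "\<not> (c, r - 1) < (c, r) \<or> (c, r - 1) \<in> I"
        using g1 by blast+
      moreover have "(c - 1, r) < (c, r)" "(c, r - 1) < (c, r)"
        using cr by (auto simp: less_prod_def less_eq_prod_def)
      ultimately show "(c - 1, r) \<in> I \<and> (c, r - 1) \<in> I" by blast
    next
      assume n: "(c - 1, r) \<in> I \<and> (c, r - 1) \<in> I"
      show "\<forall>y\<in>grid a b - I. \<not> y < (c, r)"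
      proof (intro ballI notI)
        fix y assume y: "y \<in> grid a b - I" "y < (c, r)"
        obtain y1 y2 where yy: "y = (y1, y2)" by (cases y)
        from y(2) yy have "y1 < c \<and> y2 \<le> r \<or> y1 \<le> c \<and> y2 < r"
          by (auto simp: less_prod_def less_eq_prod_def)
        then show False
        proof
          assume h: "y1 < c \<and> y2 \<le> r"
          have le: "y \<le> (c - 1, r)" using h yy by (auto simp: less_eq_prod_def)
          have "y \<in> I"
            using Idown[of "(c - 1, r)" y] n le y by auto
          then show False using y by simp
        next
          assume h: "y1 \<le> c \<and> y2 < r"
          have le: "y \<le> (c, r - 1)" using h yy by (auto simp: less_eq_prod_def)
          have "y \<in> I"
            using Idown[of "(c, r - 1)" y] n le y by auto
          then show False using y by simp
        qed
      qed
    qed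
    have d: "(c - 1, r) \<in> I \<and> (c, r - 1) \<in> I" if "(c, r) \<in> I"
      using Idown[OF that] g1 by (auto simp: less_eq_prod_def)
    show ?thesis
      unfolding Tplus_def key f_def ind_def using d cr by auto
  qed
  define h where "h c r = f (c - 1) r * f c (r - 1) - f c r" for c r
  have hout: "h (Suc a) r = 0" "h c (Suc b) = 0" for c r
    unfolding h_def using out by auto
  have S1: "{(i', j') \<in> grid a b. i' \<ge> i \<and> j' \<ge> j} = {i..a} \<times> {j..b}"
    using ij by (auto simp: grid_def)
  have S2: "{(i', j') \<in> grid a b. i' > i \<and> j' > j} = {Suc i..a} \<times> {Suc j..b}"
    using ij by (auto simp: grid_def)
  have A: "(\<Sum>q \<in> {(i', j') \<in> grid a b. i' \<ge> i \<and> j' \<ge> j}. Tminus q I)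
     = (\<Sum>c=i..a. \<Sum>r=j..b. f c r - f (Suc c) r - f c (Suc r) + f (Suc c) (Suc r))
       + (\<Sum>c=i..a. \<Sum>r=j..b. h (Suc c) (Suc r))"
  proof -
    have "(\<Sum>q \<in> {(i', j') \<in> grid a b. i' \<ge> i \<and> j' \<ge> j}. Tminus q I)
       = (\<Sum>c=i..a. \<Sum>r=j..b. Tminus (c, r) I)"
      unfolding S1 by (simp add: sum.cartesian_product')
    also have "\<dots> = (\<Sum>c=i..a. \<Sum>r=j..b. (f c r - f (Suc c) r - f c (Suc r) + f (Suc c) (Suc r))
        + h (Suc c) (Suc r))"
    proof (intro sum.cong refl)
      fix c r assume "c \<in> {i..a}" "r \<in> {j..b}"
      then have "(c, r) \<in> grid a b" using ij by (auto simp: grid_def)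
      then show "Tminus (c, r) I = (f c r - f (Suc c) r - f c (Suc r) + f (Suc c) (Suc r))
        + h (Suc c) (Suc r)" using Tm by (simp add: h_def)
    qed
    also have "\<dots> = (\<Sum>c=i..a. \<Sum>r=j..b. f c r - f (Suc c) r - f c (Suc r) + f (Suc c) (Suc r))
       + (\<Sum>c=i..a. \<Sum>r=j..b. h (Suc c) (Suc r))"
      by (simp add: sum.distrib)
    finally show ?thesis .
  qed
  have B: "(\<Sum>q \<in> {(i', j') \<in> grid a b. i' > i \<and> j' > j}. Tplus (grid a b) q I)
     = (\<Sum>c=i..a. \<Sum>r=j..b. h (Suc c) (Suc r))"
  proof -
    have "(\<Sum>q \<in> {(i', j') \<in> grid a b. i' > i \<and> j' > j}. Tplus (grid a b) q I)
       = (\<Sum>c=Suc i..a. \<Sum>r=Suc j..b. Tplus (grid a b) (c, r) I)"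
      unfolding S2 by (simp add: sum.cartesian_product')
    also have "\<dots> = (\<Sum>c=Suc i..a. \<Sum>r=Suc j..b. h c r)"
    proof (intro sum.cong refl)
      fix c r assume "c \<in> {Suc i..a}" "r \<in> {Suc j..b}"
      then show "Tplus (grid a b) (c, r) I = h c r"
        using ij Tp[of c r] by (auto simp: grid_def h_def)
    qed
    also have "\<dots> = (\<Sum>c=Suc i..Suc a. \<Sum>r=Suc j..Suc b. h c r)"
      using ij hout by simp
    also have "\<dots> = (\<Sum>c=i..a. \<Sum>r=j..b. h (Suc c) (Suc r))"
      by (simp only: sum.shift_bounds_cl_Suc_ivl)
    finally show ?thesis .
  qed
  show "ind (i, j) I =
      (\<Sum>q \<in> {(i', j') \<in> grid a b. i' \<ge> i \<and> j' \<ge> j}. Tminus q I)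
    - (\<Sum>q \<in> {(i', j') \<in> grid a b. i' > i \<and> j' > j}. Tplus (grid a b) q I)"
    unfolding A B using tele2[of i a j b f] ij out by (simp add: f_def)
qed

end
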